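(* For every $n\in\mathbb{N}$, $4^{-n}\det[D^{(1)}_{i+j}]_{0\le i,j\le n}$ is a positive odd integer.
   Context: For $m\in\mathbb{N}$, $D^{(1)}_m=\sum_{k=0}^m\binom{m}{k}\binom{2k}{k}\binom{2(m-k)}{m-k}$. $\det[a_{i+j}]_{0\le i,j\le n}$ denotes the determinant of the $(n+1)\times(n+1)$ Hankel matrix with $(i,j)$-entry $a_{i+j}$. *)

theory Defs
  imports "Jordan_Normal_Form.Determinant"
begin

definition D1 :: "nat \<Rightarrow> int" where
  "D1 m = (\<Sum>k=0..m. int (m choose k) * int ((2*k) choose k) * int ((2*(m-k)) choose (m-k)))"

definition hankel :: "(nat \<Rightarrow> int) \<Rightarrow> nat \<Rightarrow> int mat" where
  "hankel a n = mat (Suc n) (Suc n) (\<lambda>(i,j). a (i+j))"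

end

theory Submission
  imports Defs
begin

definition pw :: "nat \<Rightarrow> bool" where "pw x \<longleftrightarrow> (\<exists>k. x = 2^k)"

lemma pw_between:
  assumes "pw x" "2^a < x" "x < 2^(a+2)" shows "x = 2^(a+1)"
proof -
  from assms(1) obtain k where k: "x = 2^k" unfolding pw_def by auto
  have "a < k" using assms(2) k by (metis power_strict_increasing_iff one_less_numeral_iff semiring_norm(76))
  moreover have "k < a+2" using assms(3) k by (metis power_strict_increasing_iff one_less_numeral_iff semiring_norm(76))
  ultimately have "k = a+1" by simp
  thus ?thesis using k by simp
qed

definition valid :: "nat \<Rightarrow> (nat \<Rightarrow> nat) \<Rightarrow> bool" where
  "valid n p \<longleftrightarrow> inj_on p {1..n} \<and> p ` {1..n} \<subseteq> {1..n} \<and> (\<forall>i\<in>{1..n}. pw (i + p i))"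

lemma valid_surj: "valid n p \<Longrightarrow> p ` {1..n} = {1..n}"
  unfolding valid_def by (simp add: endo_inj_surj)

lemma split_n:
  fixes n :: nat assumes "n \<ge> 1"
  obtains a where "2^a \<le> n" "n < 2^(a+1)"
  using ex_power_ivl1[of 2 n] assms by auto

lemma valid_key:
  assumes v: "valid n p" and a: "2^a \<le> n" "n < 2^(a+1)"
    and ib: "2^(a+1) - n \<le> i" "i \<le> n"
  shows "p i = 2^(a+1) - i"
proof (cases "2^a \<le> i")
  case True
  have "i \<ge> 1" using True by (metis le_trans one_le_numeral one_le_power)
  hence i1: "i \<in> {1..n}" using ib by auto
  hence pi: "p i \<in> {1..n}" "pw (i + p i)" using v unfolding valid_def by blast+
  have "i + p i = 2^(a+1)"
    by (rule pw_between[OF pi(2)]) (use True pi(1) a ib in \<open>auto\<close>)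
  thus ?thesis by simp
next
  case False
  define j where "j = 2^(a+1) - i"
  have j: "2^a \<le> j" "j \<le> n" using False ib a unfolding j_def by auto
  have "j \<ge> 1" using j by (metis le_trans one_le_numeral one_le_power)
  hence "j \<in> p ` {1..n}" using valid_surj[OF v] j by auto
  then obtain i' where i': "i' \<in> {1..n}" "p i' = j" by auto
  have "pw (i' + j)" using v i' unfolding valid_def by auto
  have "i' + j = 2^(a+1)"
    by (rule pw_between[OF \<open>pw (i' + j)\<close>]) (use j i' a in \<open>auto\<close>)
  hence "i' = i" using j_def False a ib by auto
  thus ?thesis using i' j_def by simp
qed

lemma valid_unique: "valid n p \<Longrightarrow> valid n q \<Longrightarrow> i \<in> {1..n} \<Longrightarrow> p i = q i"
proof (induction n arbitrary: i rule: less_induct)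
  case (less n)
  hence "n \<ge> 1" by auto
  then obtain a where a: "2^a \<le> n" "n < 2^(a+1)" by (rule split_n)
  define r where "r = 2^(a+1) - n"
  have r: "1 \<le> r" "r \<le> n" using a unfolding r_def by auto
  show ?case
  proof (cases "r \<le> i")
    case True
    have ii: "2^(a+1) - n \<le> i" "i \<le> n" using True less(4) r_def by auto
    show ?thesis using valid_key[OF less(2) a ii] valid_key[OF less(3) a ii] by simp
  next
    case False
    have restr: "valid (r - 1) f" if vf: "valid n f" for f
    proof -
      have key: "\<And>i. r \<le> i \<Longrightarrow> i \<le> n \<Longrightarrow> f i = 2^(a+1) - i" using valid_key[OF vf a] r_def by auto
      have "f ` {1..r-1} \<subseteq> {1..r-1}"
      proof
        fix y assume "y \<in> f ` {1..r-1}"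
        then obtain x where x: "x \<in> {1..r-1}" "y = f x" by auto
        have "x \<in> {1..n}" using x r by auto
        hence y: "y \<in> {1..n}" using vf x unfolding valid_def by blast
        show "y \<in> {1..r-1}"
        proof (rule ccontr)
          assume "y \<notin> {1..r-1}"
          hence "r \<le> y" using y by auto
          hence "f (2^(a+1) - y) = y" using key[of "2^(a+1) - y"] y r_def a by auto
          moreover have "2^(a+1) - y \<in> {1..n}" using \<open>r \<le> y\<close> y r_def a by auto
          moreover have "x \<in> {1..n}" using x r by auto
          moreover have "inj_on f {1..n}" using vf unfolding valid_def by blast
          ultimately have "2^(a+1) - y = x" using x(2) by (metis inj_onD)
          thus False using x \<open>r \<le> y\<close> y r_def by auto
        qed
      qed
      moreover have "inj_on f {1..r-1}" using vf r unfolding valid_def by (meson atLeastatMost_subset_iff diff_le_self inj_on_subset order_refl)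
      moreover have "\<forall>i\<in>{1..r-1}. pw (i + f i)" using vf r unfolding valid_def by auto
      ultimately show ?thesis unfolding valid_def by auto
    qed
    have "r - 1 < n" using r by auto
    moreover have "i \<in> {1..r-1}" using False less(4) by auto
    ultimately show ?thesis using less.IH[OF _ restr[OF less(2)] restr[OF less(3)]] by blast
  qed
qed

lemma valid_exists: "\<exists>p. valid n p"
proof (induction n rule: less_induct)
  case (less n)
  show ?case
  proof (cases "n = 0")
    case True thus ?thesis unfolding valid_def by auto
  next
    case False
    hence "n \<ge> 1" by simp
    then obtain a where a: "2^a \<le> n" "n < 2^(a+1)" by (rule split_n)
    define r where "r = 2^(a+1) - n"
    have r: "1 \<le> r" "r \<le> n" using a unfolding r_def by auto
    have "r - 1 < n" using r by simp
    then obtain q where q: "valid (r-1) q" using less.IH[of "r-1"] by blast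
    define p where "p i = (if r \<le> i then 2^(a+1) - i else q i)" for i
    have pw2: "pw (2^(a+1))" unfolding pw_def by blast
    have "inj_on p {1..n}"
    proof (rule inj_onI)
      fix x y assume xy: "x \<in> {1..n}" "y \<in> {1..n}" "p x = p y"
      show "x = y"
      proof (cases "r \<le> x"; cases "r \<le> y")
        assume "r \<le> x" "r \<le> y" thus ?thesis using xy a unfolding p_def by auto
      next
        assume "\<not> r \<le> x" "\<not> r \<le> y" thus ?thesis using xy q unfolding p_def valid_def inj_on_def by auto
      next
        assume h: "r \<le> x" "\<not> r \<le> y"
        hence "y \<in> {1..r-1}" using xy by auto
        hence "q y \<in> {1..r-1}" using q unfolding valid_def by blast
        moreover have "p x \<ge> r" using h xy a r_def unfolding p_def by auto
        ultimately show ?thesis using xy h unfolding p_def by auto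
      next
        assume h: "\<not> r \<le> x" "r \<le> y"
        hence "x \<in> {1..r-1}" using xy by auto
        hence "q x \<in> {1..r-1}" using q unfolding valid_def by blast
        moreover have "p y \<ge> r" using h xy a r_def unfolding p_def by auto
        ultimately show ?thesis using xy h unfolding p_def by auto
      qed
    qed
    moreover have "p ` {1..n} \<subseteq> {1..n}"
    proof
      fix y assume "y \<in> p ` {1..n}"
      then obtain x where x: "x \<in> {1..n}" "y = p x" by auto
      show "y \<in> {1..n}"
      proof (cases "r \<le> x")
        case True thus ?thesis using x a r_def unfolding p_def by auto
      next
        case False
        hence "x \<in> {1..r-1}" using x by auto
        hence "q x \<in> {1..r-1}" using q unfolding valid_def by blast
        thus ?thesis using x False r unfolding p_def by auto
      qed
    qed
    moreover have "\<forall>i\<in>{1..n}. pw (i + p i)"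
    proof
      fix i assume i: "i \<in> {1..n}"
      show "pw (i + p i)"
      proof (cases "r \<le> i")
        case True thus ?thesis using i a r_def pw2 unfolding p_def by auto
      next
        case False thus ?thesis using i q unfolding p_def valid_def by auto
      qed
    qed
    ultimately show ?thesis unfolding valid_def by blast
  qed
qed

definition R :: "nat \<Rightarrow> nat \<Rightarrow> bool" where
  "R i j \<longleftrightarrow> (if i = 0 \<or> j = 0 then i = 0 \<and> j = 0 else pw (i+j))"

lemma R0: "R i 0 \<longleftrightarrow> i = 0" "R 0 j \<longleftrightarrow> j = 0" unfolding R_def by auto
lemma Rpos: "i \<noteq> 0 \<Longrightarrow> j \<noteq> 0 \<Longrightarrow> R i j \<longleftrightarrow> pw (i+j)" unfolding R_def by auto

lemma unique_perm: "\<exists>p0. {p. p permutes {0..<Suc n} \<and> (\<forall>i<Suc n. R i (p i))} = {p0}"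
proof -
  obtain p where v: "valid n p" using valid_exists by blast
  define p0 where "p0 i = (if i \<in> {1..n} then p i else i)" for i
  have vi: "inj_on p {1..n}" "p ` {1..n} \<subseteq> {1..n}" "\<forall>i\<in>{1..n}. pw (i + p i)"
    using v unfolding valid_def by auto
  have im: "p i \<in> {1..n}" if "i \<in> {1..n}" for i using vi(2) that by blast
  have "inj_on p0 {0..<Suc n}"
  proof (rule inj_onI)
    fix x y assume xy: "x \<in> {0..<Suc n}" "y \<in> {0..<Suc n}" "p0 x = p0 y"
    show "x = y"
    proof (cases "x \<in> {1..n}"; cases "y \<in> {1..n}")
      assume "x \<in> {1..n}" "y \<in> {1..n}" thus ?thesis using xy vi(1) unfolding p0_def by (metis inj_onD)
    next
      assume h: "x \<in> {1..n}" "y \<notin> {1..n}"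
      hence "y = 0" using xy by auto
      thus ?thesis using im[OF h(1)] xy h unfolding p0_def by auto
    next
      assume h: "x \<notin> {1..n}" "y \<in> {1..n}"
      hence "x = 0" using xy by auto
      thus ?thesis using im[OF h(2)] xy h unfolding p0_def by auto
    next
      assume h: "x \<notin> {1..n}" "y \<notin> {1..n}"
      thus ?thesis using xy unfolding p0_def by auto
    qed
  qed
  moreover have "p0 ` {0..<Suc n} \<subseteq> {0..<Suc n}"
  proof
    fix y assume "y \<in> p0 ` {0..<Suc n}"
    then obtain x where x: "x \<in> {0..<Suc n}" "y = p0 x" by auto
    show "y \<in> {0..<Suc n}"
    proof (cases "x \<in> {1..n}")
      case True thus ?thesis using im[OF True] x unfolding p0_def by auto
    qed (use x p0_def in auto)
  qed
  ultimately have "bij_betw p0 {0..<Suc n} {0..<Suc n}"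
    by (simp add: bij_betw_def endo_inj_surj)
  hence perm: "p0 permutes {0..<Suc n}"
    by (rule bij_imp_permutes) (auto simp: p0_def)
  have Rp0: "\<forall>i<Suc n. R i (p0 i)"
  proof (intro allI impI)
    fix i assume i: "i < Suc n"
    show "R i (p0 i)"
    proof (cases "i = 0")
      case True thus ?thesis unfolding p0_def by (simp add: R0)
    next
      case False
      hence ii: "i \<in> {1..n}" using i by auto
      have "p0 i = p i" using ii unfolding p0_def by simp
      moreover have "p i \<noteq> 0" using im[OF ii] by auto
      ultimately show ?thesis using ii vi(3) Rpos False by simp
    qed
  qed
  have "f = p0" if f: "f permutes {0..<Suc n}" "\<forall>i<Suc n. R i (f i)" for f
  proof -
    have "R 0 (f 0)" using f(2) by blast
    hence f0: "f 0 = 0" using R0(2) by blast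
    have fim: "f i \<in> {1..n}" if i: "i \<in> {1..n}" for i
    proof -
      have "f i \<in> {0..<Suc n}" using permutes_in_image[OF f(1)] i by auto
      moreover have "f i \<noteq> 0"
      proof
        assume "f i = 0"
        moreover have "R i (f i)" using f(2) i by simp
        ultimately show False using i by (metis R0(1) atLeastAtMost_iff not_one_le_zero)
      qed
      ultimately show ?thesis by auto
    qed
    have "valid n f" unfolding valid_def
    proof (intro conjI)
      show "inj_on f {1..n}" using permutes_inj[OF f(1)] inj_on_subset subset_UNIV by blast
      show "f ` {1..n} \<subseteq> {1..n}" using fim by auto
      show "\<forall>i\<in>{1..n}. pw (i + f i)"
      proof
        fix i assume i: "i \<in> {1..n}"
        hence "i < Suc n" "i \<noteq> 0" by auto
        hence "R i (f i)" using f(2) by blast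
        moreover have "f i \<noteq> 0" using fim[OF i] by simp
        ultimately show "pw (i + f i)" using \<open>i \<noteq> 0\<close> Rpos by blast
      qed
    qed
    show "f = p0"
    proof
      fix x
      show "f x = p0 x"
      proof (cases "x \<in> {1..n}")
        case True thus ?thesis using valid_unique[OF \<open>valid n f\<close> v True] unfolding p0_def by simp
      next
        case False
        show ?thesis
        proof (cases "x = 0")
          case True thus ?thesis using f0 unfolding p0_def by simp
        next
          case False
          hence "x \<notin> {0..<Suc n}" using \<open>x \<notin> {1..n}\<close> by auto
          hence "f x = x" using permutes_not_in[OF f(1)] by blast
          thus ?thesis using \<open>x \<notin> {1..n}\<close> unfolding p0_def by auto
        qed
      qed
    qed
  qed
  hence "{p. p permutes {0..<Suc n} \<and> (\<forall>i<Suc n. R i (p i))} = {p0}"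
    using perm Rp0 by blast
  thus ?thesis by blast
qed

lemma pascal2: "(Suc (Suc n)) choose (Suc (Suc k)) = (n choose Suc (Suc k)) + 2 * (n choose Suc k) + (n choose k)"
  by simp

lemma modlem: "(x::nat) mod 2 = u mod 2 \<Longrightarrow> z mod 2 = w mod 2 \<Longrightarrow> (x + 2*y + z) mod 2 = (u + w) mod 2"
proof -
  assume a: "(x::nat) mod 2 = u mod 2" "z mod 2 = w mod 2"
  have "(x + 2*y + z) mod 2 = ((x + z) + y*2) mod 2" by (simp add: algebra_simps)
  also have "\<dots> = (x + z) mod 2" by (rule mod_mult_self1)
  also have "\<dots> = (x mod 2 + z mod 2) mod 2" by (simp add: mod_add_eq)
  also have "\<dots> = (u mod 2 + w mod 2) mod 2" using a by simp
  also have "\<dots> = (u + w) mod 2" by (simp add: mod_add_eq)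
  finally show ?thesis .
qed

lemma binom_par: "even ((2*a) choose (2*b+1)) \<and> ((2*a) choose (2*b)) mod 2 = (a choose b) mod 2"
proof (induction a arbitrary: b)
  case 0 thus ?case by (cases b) auto
next
  case (Suc a)
  show ?case
  proof (cases b)
    case 0 thus ?thesis by simp
  next
    case (Suc b')
    have e: "2 * Suc a = Suc (Suc (2*a))" "2*Suc b'+1 = Suc(Suc(2*b'+1))" "2*Suc b' = Suc (Suc (2*b'))"
      "Suc (2*b') = 2*b'+1" by simp_all
    have A: "(2 * Suc a) choose (2*Suc b'+1) = ((2*a) choose (2*Suc b'+1)) + 2 * ((2*a) choose (2*Suc b')) + ((2*a) choose (2*b'+1))"
      unfolding e(1,2) using pascal2[of "2*a" "2*b'+1"] by (simp only: e)
    have B: "(2 * Suc a) choose (2*Suc b') = ((2*a) choose (2*Suc b')) + 2 * ((2*a) choose (2*b'+1)) + ((2*a) choose (2*b'))"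
      unfolding e(1,3) using pascal2[of "2*a" "2*b'"] by (simp only: e)
    have i1: "even ((2*a) choose (2*Suc b'+1))" "even ((2*a) choose (2*b'+1))" using Suc.IH by blast+
    have i2: "((2*a) choose (2*Suc b')) mod 2 = (a choose Suc b') mod 2"
      "((2*a) choose (2*b')) mod 2 = (a choose b') mod 2" using Suc.IH by blast+
    have "even ((2 * Suc a) choose (2*Suc b'+1))" unfolding A using i1 by simp
    moreover have "((2 * Suc a) choose (2*Suc b')) mod 2 = (Suc a choose Suc b') mod 2"
    proof -
      have "((2 * Suc a) choose (2*Suc b')) mod 2 = ((a choose Suc b') + (a choose b')) mod 2"
        unfolding B by (rule modlem[OF i2(1) i2(2)])
      also have "(a choose Suc b') + (a choose b') = Suc a choose Suc b'" by simp
      finally show ?thesis .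
    qed
    ultimately show ?thesis using Suc by simp
  qed
qed

lemma binom_par2: "((2*a+1) choose (2*b+1)) mod 2 = (a choose b) mod 2"
proof -
  have "((2*a+1) choose (2*b+1)) = ((2*a) choose (2*b+1)) + ((2*a) choose (2*b))" by simp
  thus ?thesis using binom_par[of a b] by (auto simp: mod_add_eq[symmetric] elim!: evenE)
qed

lemma central: "k \<ge> 1 \<Longrightarrow> (2*k) choose k = 2 * ((2*k-1) choose (k-1))"
proof -
  assume "k \<ge> 1"
  then obtain j where k: "k = Suc j" by (cases k) auto
  have "((2*k) choose k) = ((2*j+1) choose j) + ((2*j+1) choose (Suc j))" unfolding k by simp
  moreover have "(2*j+1) choose (Suc j) = (2*j+1) choose j"
    using binomial_symmetric[of "Suc j" "2*j+1"] by simp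
  ultimately show ?thesis unfolding k by simp
qed

lemma pw_double: "pw (2*t) \<longleftrightarrow> pw t"
proof
  assume "pw (2*t)"
  then obtain k where k: "2*t = 2^k" unfolding pw_def by auto
  have "k \<noteq> 0" using k by (metis even_mult_iff odd_one power_0 even_numeral)
  then obtain k' where "k = Suc k'" by (cases k) auto
  thus "pw t" using k unfolding pw_def by auto
next
  assume "pw t" thus "pw (2*t)" unfolding pw_def by (metis power_Suc)
qed

lemma pw_odd: "t \<ge> 1 \<Longrightarrow> \<not> pw (2*t+1)"
proof
  assume t: "t \<ge> 1" and "pw (2*t+1)"
  then obtain k where k: "2*t+1 = 2^k" unfolding pw_def by auto
  have "k = 0"
  proof (rule ccontr)
    assume "k \<noteq> 0" hence "even ((2::nat)^k)" by simp
    hence "even (2*t+1)" using k by simp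
    thus False by simp
  qed
  thus False using k t by simp
qed

lemma c_parity: "k \<ge> 1 \<Longrightarrow> odd ((2*k-1) choose (k-1)) \<longleftrightarrow> pw k"
proof (induction k rule: less_induct)
  case (less k)
  show ?case
  proof (cases "k = 1")
    case True
    have "pw 1" unfolding pw_def by (rule exI[of _ 0]) simp
    thus ?thesis using True by simp
  next
    case False
    show ?thesis
    proof (cases "even k")
      case True
      then obtain t where t: "k = 2*t" by blast
      have t1: "t \<ge> 1" "t < k" using t less(2) False by auto
      have e: "2*k-1 = 2*(2*t-1)+1" "k-1 = 2*(t-1)+1" using t t1 by auto
      have "(2*k-1) choose (k-1) = (2*(2*t-1)+1) choose (2*(t-1)+1)" unfolding e ..
      hence "((2*k-1) choose (k-1)) mod 2 = ((2*t-1) choose (t-1)) mod 2" using binom_par2[of "2*t-1" "t-1"] by simp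
      hence "odd ((2*k-1) choose (k-1)) \<longleftrightarrow> odd ((2*t-1) choose (t-1))" by (simp add: odd_iff_mod_2_eq_one)
      also have "\<dots> \<longleftrightarrow> pw t" using less.IH[OF t1(2) t1(1)] .
      also have "\<dots> \<longleftrightarrow> pw k" using pw_double t by simp
      finally show ?thesis .
    next
      case odd: False
      then obtain t where t: "k = 2*t+1" using oddE by blast
      have t1: "t \<ge> 1" using t False by auto
      have e: "2*k-1 = 2*(2*t)+1" "k-1 = 2*t" using t by auto
      have "(2*k-1) choose (k-1) = (2*(2*t)+1) choose (2*t)" unfolding e ..
      also have "\<dots> = (2*(2*t)+1) choose (2*t+1)"
        using binomial_symmetric[of "2*t" "2*(2*t)+1"] by simp
      finally have X: "(2*k-1) choose (k-1) = (2*(2*t)+1) choose (2*t+1)" .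
      have "((2*k-1) choose (k-1)) mod 2 = ((2*t) choose t) mod 2" unfolding X by (rule binom_par2)
      moreover have "even ((2*t) choose t)" using central[OF t1] by simp
      ultimately have "even ((2*k-1) choose (k-1))" by (simp add: even_iff_mod_2_eq_zero)
      thus ?thesis using pw_odd[OF t1] t by simp
    qed
  qed
qed

definition cc :: "nat \<Rightarrow> nat" where "cc k = (2*k-1) choose (k-1)"

definition DN :: "nat \<Rightarrow> nat" where
  "DN m = (\<Sum>k=0..m. (m choose k) * ((2*k) choose k) * ((2*(m-k)) choose (m-k)))"

lemma D1_DN: "D1 m = int (DN m)"
  unfolding D1_def DN_def by (simp add: of_nat_mult)

lemma sym_even:
  fixes g :: "nat \<Rightarrow> nat"
  assumes sym: "\<And>k. k \<in> {1..<m} \<Longrightarrow> g (m - k) = g k"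
    and mid: "\<And>k. k \<in> {1..<m} \<Longrightarrow> 2*k = m \<Longrightarrow> even (g k)"
  shows "even (\<Sum>k\<in>{1..<m}. g k)"
proof -
  define A where "A = {k\<in>{1..<m}. 2*k < m}"
  define B where "B = {k\<in>{1..<m}. 2*k > m}"
  define C where "C = {k\<in>{1..<m}. 2*k = m}"
  have U: "{1..<m} = A \<union> (B \<union> C)" unfolding A_def B_def C_def by auto
  have fin: "finite A" "finite B" "finite C" unfolding A_def B_def C_def by auto
  have "sum g {1..<m} = sum g A + (sum g B + sum g C)"
    unfolding U using fin
    by (simp add: sum.union_disjoint A_def B_def C_def disjoint_iff)
  moreover have "sum g B = sum g A"
    apply (rule sum.reindex_bij_witness[of _ "\<lambda>k. m - k" "\<lambda>k. m - k"])
    apply (auto simp: A_def B_def)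
    apply (subst sym) apply auto
    done
  moreover have "even (sum g C)"
    by (rule dvd_sum) (use mid in \<open>auto simp: C_def\<close>)
  ultimately show ?thesis by simp
qed

lemma DN_split:
  assumes m: "m \<ge> 1"
  shows "DN m = 4 * (cc m + (\<Sum>k\<in>{1..<m}. (m choose k) * cc k * cc (m-k)))"
proof -
  define f where "f k = (m choose k) * ((2*k) choose k) * ((2*(m-k)) choose (m-k))" for k
  have S: "{0..m} = insert 0 (insert m {1..<m})" using m by auto
  have "DN m = f 0 + (f m + sum f {1..<m})"
    unfolding DN_def f_def[symmetric] S using m by (simp add: sum.insert)
  moreover have "f 0 = 2 * cc m" "f m = 2 * cc m" unfolding f_def cc_def using central[OF m] by simp_all
  moreover have "sum f {1..<m} = 4 * (\<Sum>k\<in>{1..<m}. (m choose k) * cc k * cc (m-k))"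
  proof -
    have "sum f {1..<m} = (\<Sum>k\<in>{1..<m}. 4 * ((m choose k) * cc k * cc (m-k)))"
    proof (rule sum.cong)
      fix k assume k: "k \<in> {1..<m}"
      hence "k \<ge> 1" "m - k \<ge> 1" by auto
      thus "f k = 4 * ((m choose k) * cc k * cc (m-k))"
        unfolding f_def cc_def using central[of k] central[of "m-k"] by simp
    qed simp
    thus ?thesis by (simp add: sum_distrib_left)
  qed
  ultimately show ?thesis by simp
qed

lemma DN_mod8:
  assumes m: "m \<ge> 1"
  shows "\<exists>e. DN m = 4 * e \<and> (odd e \<longleftrightarrow> pw m)"
proof -
  define g where "g k = (m choose k) * cc k * cc (m-k)" for k
  have "even (\<Sum>k\<in>{1..<m}. g k)"
  proof (rule sym_even)
    fix k assume k: "k \<in> {1..<m}"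
    hence "m - k \<le> m" by auto
    show "g (m - k) = g k" unfolding g_def using k binomial_symmetric[of k m] by (simp add: mult.commute)
  next
    fix k assume k: "k \<in> {1..<m}" "2*k = m"
    have "even (m choose k)" using central[of k] k by auto
    thus "even (g k)" unfolding g_def by simp
  qed
  moreover have "odd (cc m) \<longleftrightarrow> pw m" unfolding cc_def using c_parity[OF m] .
  ultimately show ?thesis using DN_split[OF m] unfolding g_def by (intro exI[of _ "cc m + (\<Sum>k\<in>{1..<m}. g k)"]) (auto simp: g_def)
qed

definition ex :: "nat \<Rightarrow> nat" where "ex i = (if i = 0 then 0 else 1)"
definition E :: "nat \<Rightarrow> nat \<Rightarrow> int" where "E i j = D1 (i+j) div 2^(ex i + ex j)"
definition Rind :: "nat \<Rightarrow> nat \<Rightarrow> int" where "Rind i j = (if R i j then 1 else 0)"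

lemma D1_0: "D1 0 = 1" unfolding D1_def by simp

lemma Efact: "D1 (i+j) = 2^(ex i + ex j) * E i j \<and> E i j mod 2 = Rind i j"
proof (cases "i = 0 \<or> j = 0")
  case True
  show ?thesis
  proof (cases "i = 0 \<and> j = 0")
    case True thus ?thesis unfolding E_def ex_def Rind_def by (simp add: D1_0 R0)
  next
    case False
    hence m: "i + j \<ge> 1" "ex i + ex j = 1" using \<open>i = 0 \<or> j = 0\<close> unfolding ex_def by auto
    obtain e where e: "DN (i+j) = 4 * e" using DN_mod8[OF m(1)] by blast
    have "D1 (i+j) = int (DN (i+j))" by (rule D1_DN)
    also have "\<dots> = 2 * (2 * int e)" using e by simp
    finally have D: "D1 (i+j) = 2 * (2 * int e)" .
    have "E i j = 2 * int e" unfolding E_def m(2) D by simp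
    moreover have "\<not> R i j" using True False by (metis R0)
    ultimately show ?thesis unfolding Rind_def m(2) D by simp
  qed
next
  case False
  hence m: "i + j \<ge> 1" "ex i + ex j = 2" unfolding ex_def by auto
  obtain e where e: "DN (i+j) = 4 * e" "odd e \<longleftrightarrow> pw (i+j)" using DN_mod8[OF m(1)] by blast
  have "D1 (i+j) = int (DN (i+j))" by (rule D1_DN)
  also have "\<dots> = 4 * int e" using e by simp
  finally have D: "D1 (i+j) = 4 * int e" .
  have EE: "E i j = int e" unfolding E_def m(2) D by simp
  have "R i j \<longleftrightarrow> odd e" using Rpos False e(2) by auto
  moreover have "int e mod 2 = (if odd e then 1 else 0)"
    by (cases "even e") (auto elim!: evenE oddE)
  ultimately have "E i j mod 2 = Rind i j" unfolding EE Rind_def by simp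
  thus ?thesis using D EE m(2) by simp
qed

lemma hankel_carrier: "hankel a n \<in> carrier_mat (Suc n) (Suc n)"
  unfolding hankel_def by simp

lemma hankel_index: "i < Suc n \<Longrightarrow> j < Suc n \<Longrightarrow> hankel a n $$ (i,j) = a (i+j)"
  unfolding hankel_def by simp

lemma sum_ex: "(\<Sum>i\<in>{0..<Suc n}. ex i) = n"
proof (induction n)
  case 0 thus ?case by (simp add: ex_def)
next
  case (Suc n) thus ?case by (simp add: ex_def)
qed

definition qq :: "nat \<Rightarrow> int" where
  "qq n = (\<Sum>p\<in>{p. p permutes {0..<Suc n}}. signof p * (\<Prod>i=0..<Suc n. E i (p i)))"

lemma det_qq: "det (hankel D1 n) = 4^n * qq n"
proof -
  have "det (hankel D1 n) = (\<Sum>p\<in>{p. p permutes {0..<Suc n}}. signof p * (\<Prod>i=0..<Suc n. hankel D1 n $$ (i, p i)))"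
    by (rule det_def'[OF hankel_carrier])
  also have "\<dots> = (\<Sum>p\<in>{p. p permutes {0..<Suc n}}. 4^n * (signof p * (\<Prod>i=0..<Suc n. E i (p i))))"
  proof (rule sum.cong[OF refl])
    fix p assume "p \<in> {p. p permutes {0..<Suc n}}"
    hence p: "p permutes {0..<Suc n}" by simp
    have pi: "p i < Suc n" if "i < Suc n" for i using permutes_in_image[OF p] that by auto
    have "(\<Prod>i=0..<Suc n. hankel D1 n $$ (i, p i)) = (\<Prod>i=0..<Suc n. (2::int)^(ex i + ex (p i)) * E i (p i))"
      by (rule prod.cong[OF refl]) (use pi Efact hankel_index in auto)
    also have "\<dots> = (\<Prod>i=0..<Suc n. (2::int)^(ex i + ex (p i))) * (\<Prod>i=0..<Suc n. E i (p i))"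
      by (rule prod.distrib)
    also have "(\<Prod>i=0..<Suc n. (2::int)^(ex i + ex (p i))) = 2^(\<Sum>i=0..<Suc n. ex i + ex (p i))"
      by (rule power_sum[symmetric])
    also have "(\<Sum>i=0..<Suc n. ex i + ex (p i)) = 2 * n"
    proof -
      have "(\<Sum>i=0..<Suc n. ex (p i)) = (\<Sum>i=0..<Suc n. ex i)"
        using sum.permute[OF p, of ex] by (simp add: comp_def)
      thus ?thesis using sum_ex[of n] by (simp add: sum.distrib)
    qed
    also have "(2::int)^(2*n) = 4^n" by (simp add: power_mult)
    finally show "signof p * (\<Prod>i=0..<Suc n. hankel D1 n $$ (i, p i)) = 4^n * (signof p * (\<Prod>i=0..<Suc n. E i (p i)))"
      by simp
  qed
  also have "\<dots> = 4^n * qq n" unfolding qq_def by (simp add: sum_distrib_left)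
  finally show ?thesis .
qed

lemma sign_mod2: "(sign p * (x::int)) mod 2 = x mod 2"
proof (cases rule: sign_cases[of p])
  case odd
  have "even (-x) \<longleftrightarrow> even x" by simp
  hence "(-x) mod 2 = x mod 2" by (metis even_iff_mod_2_eq_zero odd_iff_mod_2_eq_one)
  thus ?thesis using odd by simp
qed simp

lemma qq_odd: "odd (qq n)"
proof -
  define P where "P = {p. p permutes {0..<Suc n}}"
  have finP: "finite P" unfolding P_def by (rule finite_permutations) simp
  have "qq n mod 2 = (\<Sum>p\<in>P. (signof p * (\<Prod>i=0..<Suc n. E i (p i))) mod 2) mod 2"
    unfolding qq_def P_def by (simp add: mod_sum_eq)
  also have "\<dots> = (\<Sum>p\<in>P. (\<Prod>i=0..<Suc n. Rind i (p i))) mod 2"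
  proof -
    have "(signof p * (\<Prod>i=0..<Suc n. E i (p i))) mod 2 = (\<Prod>i=0..<Suc n. Rind i (p i)) mod 2" for p
    proof -
      have "(signof p * (\<Prod>i=0..<Suc n. E i (p i))) mod 2 = (\<Prod>i=0..<Suc n. E i (p i)) mod 2"
        using sign_mod2 by simp
      also have "\<dots> = (\<Prod>i=0..<Suc n. E i (p i) mod 2) mod 2" by (rule mod_prod_eq[symmetric])
      also have "\<dots> = (\<Prod>i=0..<Suc n. Rind i (p i)) mod 2" using Efact by simp
      finally show ?thesis .
    qed
    hence "(\<Sum>p\<in>P. (signof p * (\<Prod>i=0..<Suc n. E i (p i))) mod 2) = (\<Sum>p\<in>P. (\<Prod>i=0..<Suc n. Rind i (p i)) mod 2)"
      by simp
    thus ?thesis by (simp add: mod_sum_eq)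
  qed
  also have "(\<Sum>p\<in>P. (\<Prod>i=0..<Suc n. Rind i (p i))) = (\<Sum>p\<in>P. (if p \<in> {p. p permutes {0..<Suc n} \<and> (\<forall>i<Suc n. R i (p i))} then 1 else 0))"
  proof (rule sum.cong[OF refl])
    fix p assume "p \<in> P"
    show "(\<Prod>i=0..<Suc n. Rind i (p i)) = (if p \<in> {p. p permutes {0..<Suc n} \<and> (\<forall>i<Suc n. R i (p i))} then 1 else 0)"
    proof (cases "\<forall>i<Suc n. R i (p i)")
      case True thus ?thesis using \<open>p \<in> P\<close> unfolding P_def Rind_def by simp
    next
      case False
      then obtain i where i: "i < Suc n" "\<not> R i (p i)" by auto
      hence "Rind i (p i) = 0" unfolding Rind_def by simp
      hence pr0: "(\<Prod>i=0..<Suc n. Rind i (p i)) = 0" using i(1) by (meson atLeastLessThan_iff finite_atLeastLessThan prod_zero_iff zero_le)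
      have np: "p \<notin> {p. p permutes {0..<Suc n} \<and> (\<forall>i<Suc n. R i (p i))}" using False by blast
      show ?thesis unfolding if_not_P[OF np] by (rule pr0)
    qed
  qed
  also have "\<dots> = 1"
  proof -
    obtain p0 where p0: "{p. p permutes {0..<Suc n} \<and> (\<forall>i<Suc n. R i (p i))} = {p0}" using unique_perm by blast
    have "p0 \<in> P" using p0 unfolding P_def by auto
    thus ?thesis unfolding p0 using finP by (simp add: sum.delta)
  qed
  finally show ?thesis by (simp add: odd_iff_mod_2_eq_one)
qed

lemma det_form: "\<exists>q. det (hankel D1 n) = 4^n * q \<and> odd q"
  using det_qq qq_odd by blast

lemma cis_ne1:
  fixes d :: int
  assumes N: "N > 0" and d: "d \<noteq> 0" "\<bar>d\<bar> < int N"
  shows "cis (2*pi*real_of_int d / real N) \<noteq> 1"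
proof
  assume "cis (2*pi*real_of_int d / real N) = 1"
  hence "cos (2*pi*real_of_int d / real N) = 1" by (metis cis.sel(1) one_complex.sel(1))
  then obtain k :: int where k: "2*pi*real_of_int d / real N = real_of_int k * 2 * pi"
    using cos_one_2pi_int by blast
  hence "real_of_int d = real_of_int k * real N" using N by (simp add: field_simps)
  hence "d = k * int N" by (metis of_int_eq_iff of_int_mult of_int_of_nat_eq)
  moreover have "k \<noteq> 0" using d calculation by auto
  moreover have "\<bar>k\<bar> * int N \<ge> 1 * int N" using \<open>k \<noteq> 0\<close> by (intro mult_right_mono) auto
  ultimately have "\<bar>d\<bar> \<ge> int N" by (simp add: abs_mult)
  thus False using d by simp
qed

lemma rootsum:
  assumes N: "N > 0" and ab: "a < N" "b < N"
  shows "(\<Sum>j<N. cis (2*pi*real j/real N)^a * cnj (cis (2*pi*real j/real N))^b) = (if a = b then of_nat N else 0)"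
proof -
  define x where "x = 2*pi*(real a - real b)/real N"
  have tm: "cis (2*pi*real j/real N)^a * cnj (cis (2*pi*real j/real N))^b = cis x ^ j" for j
  proof -
    have "cis (2*pi*real j/real N)^a * cnj (cis (2*pi*real j/real N))^b
        = cis (real a * (2*pi*real j/real N)) * cis (real b * (-(2*pi*real j/real N)))"
      by (simp add: cis_cnj DeMoivre)
    also have "\<dots> = cis (real j * x)"
    proof -
      have "real a * (2*pi*real j/real N) + real b * (-(2*pi*real j/real N)) = real j * x"
        unfolding x_def by (simp add: field_simps diff_divide_distrib)
      thus ?thesis unfolding cis_mult by simp
    qed
    also have "\<dots> = cis x ^ j" by (simp add: DeMoivre)
    finally show ?thesis .
  qed
  show ?thesis
  proof (cases "a = b")
    case True
    hence "x = 0" unfolding x_def by simp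
    thus ?thesis unfolding tm using True by simp
  next
    case False
    define d where "d = int a - int b"
    have x: "x = 2*pi*real_of_int d / real N" unfolding x_def d_def by simp
    have ne: "cis x \<noteq> 1" unfolding x by (rule cis_ne1) (use N ab False in \<open>auto simp: d_def\<close>)
    have "cis x ^ N = cis (2 * pi * real_of_int d)" unfolding x DeMoivre using N by (simp add: field_simps)
    also have "\<dots> = 1" by (rule cis_multiple_2pi) simp
    finally have "cis x ^ N = 1" .
    hence "(\<Sum>j<N. cis x ^ j) = 0" using ne by (simp add: sum_gp_strict)
    thus ?thesis unfolding tm using False by simp
  qed
qed

definition ww :: "nat \<Rightarrow> nat \<Rightarrow> complex" where "ww N j = cis (2*pi*real j/real N)"
definition tt :: "nat \<Rightarrow> nat \<Rightarrow> real" where "tt N j = (cmod (1 + ww N j))^2"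

lemma tt_pow: "complex_of_real (tt N j ^ k) = (\<Sum>a\<le>k. \<Sum>b\<le>k. of_nat (k choose a) * of_nat (k choose b) * (ww N j ^ a * cnj (ww N j) ^ b))"
proof -
  have "complex_of_real (tt N j) = (1 + ww N j) * (1 + cnj (ww N j))"
    unfolding tt_def complex_norm_square by simp
  hence "complex_of_real (tt N j ^ k) = (ww N j + 1)^k * (cnj (ww N j) + 1)^k"
    by (simp add: power_mult_distrib add.commute)
  also have "\<dots> = (\<Sum>a\<le>k. of_nat (k choose a) * ww N j ^ a) * (\<Sum>b\<le>k. of_nat (k choose b) * cnj (ww N j) ^ b)"
    unfolding binomial_ring by simp
  also have "\<dots> = (\<Sum>a\<le>k. \<Sum>b\<le>k. of_nat (k choose a) * of_nat (k choose b) * (ww N j ^ a * cnj (ww N j) ^ b))"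
    unfolding sum_product by (simp add: algebra_simps)
  finally show ?thesis .
qed

lemma E1:
  assumes N: "N > 0" and k: "k < N"
  shows "(\<Sum>j<N. tt N j ^ k) = real N * real ((2*k) choose k)"
proof -
  have "complex_of_real (\<Sum>j<N. tt N j ^ k) = (\<Sum>j<N. \<Sum>a\<le>k. \<Sum>b\<le>k. of_nat (k choose a) * of_nat (k choose b) * (ww N j ^ a * cnj (ww N j) ^ b))"
    by (simp only: of_real_sum tt_pow)
  also have "\<dots> = (\<Sum>a\<le>k. \<Sum>b\<le>k. of_nat (k choose a) * of_nat (k choose b) * (\<Sum>j<N. ww N j ^ a * cnj (ww N j) ^ b))"
    by (simp add: sum.swap[of _ "{..<N}"] sum_distrib_left)
  also have "\<dots> = (\<Sum>a\<le>k. \<Sum>b\<le>k. of_nat (k choose a) * of_nat (k choose b) * (if a = b then of_nat N else 0))"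
  proof (intro sum.cong refl)
    fix a b assume "a \<in> {..k}" "b \<in> {..k}"
    hence "a < N" "b < N" using k by auto
    thus "of_nat (k choose a) * of_nat (k choose b) * (\<Sum>j<N. ww N j ^ a * cnj (ww N j) ^ b) =
          of_nat (k choose a) * of_nat (k choose b) * (if a = b then of_nat N else (0::complex))"
      unfolding ww_def using rootsum[OF N] by simp
  qed
  also have "\<dots> = (\<Sum>a\<le>k. of_nat ((k choose a)^2) * of_nat N)"
    by (simp add: if_distrib power2_eq_square sum.delta cong: if_cong)
  also have "\<dots> = of_nat (\<Sum>a\<le>k. (k choose a)^2) * of_nat N" by (simp add: sum_distrib_right)
  also have "\<dots> = complex_of_real (real N * real ((2*k) choose k))" by (simp add: choose_square_sum)
  finally show ?thesis using of_real_eq_iff by blast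
qed

lemma prod3: "(c::real) * sum x A * sum y B = (\<Sum>j\<in>A. \<Sum>l\<in>B. c * x j * y l)"
  unfolding sum_distrib_left[of c x A] sum_product ..

lemma E2:
  assumes N: "N > 0" and m: "m < N"
  shows "real N ^ 2 * real_of_int (D1 m) = (\<Sum>j<N. \<Sum>l<N. (tt N j + tt N l)^m)"
proof -
  have "real N ^ 2 * real_of_int (D1 m) = (\<Sum>k=0..m. real (m choose k) * (real N * real ((2*k) choose k)) * (real N * real ((2*(m-k)) choose (m-k))))"
    unfolding D1_def by (simp add: sum_distrib_left algebra_simps power2_eq_square)
  also have "\<dots> = (\<Sum>k=0..m. real (m choose k) * (\<Sum>j<N. tt N j ^ k) * (\<Sum>l<N. tt N l ^ (m-k)))"
  proof (rule sum.cong[OF refl])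
    fix k assume "k \<in> {0..m}"
    hence "k < N" "m - k < N" using m by auto
    thus "real (m choose k) * (real N * real ((2*k) choose k)) * (real N * real ((2*(m-k)) choose (m-k))) =
      real (m choose k) * (\<Sum>j<N. tt N j ^ k) * (\<Sum>l<N. tt N l ^ (m-k))"
      using E1[OF N] by simp
  qed
  also have "\<dots> = (\<Sum>k=0..m. \<Sum>j<N. \<Sum>l<N. real (m choose k) * tt N j ^ k * tt N l ^ (m-k))"
    by (simp only: prod3)
  also have "\<dots> = (\<Sum>j<N. \<Sum>l<N. \<Sum>k=0..m. real (m choose k) * tt N j ^ k * tt N l ^ (m-k))"
    by (rule trans[OF sum.swap], rule sum.cong[OF refl], rule sum.swap)
  also have "\<dots> = (\<Sum>j<N. \<Sum>l<N. (tt N j + tt N l)^m)"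
    by (simp add: binomial_ring atLeast0AtMost)
  finally show ?thesis .
qed

lemma swap4:
  "(\<Sum>i\<in>A. \<Sum>i'\<in>B. \<Sum>j\<in>C. \<Sum>l\<in>D. f i i' j l) = (\<Sum>j\<in>C. \<Sum>l\<in>D. \<Sum>i\<in>A. \<Sum>i'\<in>B. f i i' j l)"
proof -
  have "(\<Sum>i'\<in>B. \<Sum>j\<in>C. \<Sum>l\<in>D. f i i' j l) = (\<Sum>j\<in>C. \<Sum>l\<in>D. \<Sum>i'\<in>B. f i i' j l)" for i
    by (rule trans[OF sum.swap], rule sum.cong[OF refl], rule sum.swap)
  hence "(\<Sum>i\<in>A. \<Sum>i'\<in>B. \<Sum>j\<in>C. \<Sum>l\<in>D. f i i' j l) = (\<Sum>i\<in>A. \<Sum>j\<in>C. \<Sum>l\<in>D. \<Sum>i'\<in>B. f i i' j l)"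
    by simp
  also have "\<dots> = (\<Sum>j\<in>C. \<Sum>l\<in>D. \<Sum>i\<in>A. \<Sum>i'\<in>B. f i i' j l)"
    by (rule trans[OF sum.swap], rule sum.cong[OF refl], rule sum.swap)
  finally show ?thesis .
qed

lemma psd:
  fixes a :: "nat \<Rightarrow> int"
  shows "0 \<le> (\<Sum>i<Suc n. \<Sum>i'<Suc n. a i * a i' * D1 (i+i'))"
proof -
  define N where "N = 2*n+1"
  have N: "N > 0" unfolding N_def by simp
  define s where "s j l = tt N j + tt N l" for j l
  have "real N ^ 2 * real_of_int (\<Sum>i<Suc n. \<Sum>i'<Suc n. a i * a i' * D1 (i+i'))
      = (\<Sum>i<Suc n. \<Sum>i'<Suc n. real_of_int (a i) * real_of_int (a i') * (real N ^ 2 * real_of_int (D1 (i+i'))))"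
    by (simp add: sum_distrib_left algebra_simps)
  also have "\<dots> = (\<Sum>i<Suc n. \<Sum>i'<Suc n. real_of_int (a i) * real_of_int (a i') * (\<Sum>j<N. \<Sum>l<N. s j l ^ (i+i')))"
  proof (intro sum.cong refl)
    fix i i' assume "i \<in> {..<Suc n}" "i' \<in> {..<Suc n}"
    hence "i + i' < N" unfolding N_def by auto
    thus "real_of_int (a i) * real_of_int (a i') * (real N ^ 2 * real_of_int (D1 (i+i'))) =
      real_of_int (a i) * real_of_int (a i') * (\<Sum>j<N. \<Sum>l<N. s j l ^ (i+i'))"
      using E2[OF N] unfolding s_def by simp
  qed
  also have "\<dots> = (\<Sum>j<N. \<Sum>l<N. \<Sum>i<Suc n. \<Sum>i'<Suc n. (real_of_int (a i) * s j l ^ i) * (real_of_int (a i') * s j l ^ i'))"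
  proof -
    have "real_of_int (a i) * real_of_int (a i') * (\<Sum>j<N. \<Sum>l<N. s j l ^ (i+i')) =
      (\<Sum>j<N. \<Sum>l<N. (real_of_int (a i) * s j l ^ i) * (real_of_int (a i') * s j l ^ i'))" for i i'
      by (simp add: sum_distrib_left power_add algebra_simps)
    hence "(\<Sum>i<Suc n. \<Sum>i'<Suc n. real_of_int (a i) * real_of_int (a i') * (\<Sum>j<N. \<Sum>l<N. s j l ^ (i+i'))) =
      (\<Sum>i<Suc n. \<Sum>i'<Suc n. \<Sum>j<N. \<Sum>l<N. (real_of_int (a i) * s j l ^ i) * (real_of_int (a i') * s j l ^ i'))"
      by simp
    also have "\<dots> = (\<Sum>j<N. \<Sum>l<N. \<Sum>i<Suc n. \<Sum>i'<Suc n. (real_of_int (a i) * s j l ^ i) * (real_of_int (a i') * s j l ^ i'))"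
      by (rule swap4)
    finally show ?thesis .
  qed
  also have "\<dots> = (\<Sum>j<N. \<Sum>l<N. (\<Sum>i<Suc n. real_of_int (a i) * s j l ^ i)^2)"
    by (simp only: power2_eq_square sum_product)
  also have "\<dots> \<ge> 0" by (intro sum_nonneg) simp
  finally have "0 \<le> real N ^ 2 * real_of_int (\<Sum>i<Suc n. \<Sum>i'<Suc n. a i * a i' * D1 (i+i'))" .
  hence "0 \<le> real_of_int (\<Sum>i<Suc n. \<Sum>i'<Suc n. a i * a i' * D1 (i+i'))"
    using N by (simp add: zero_le_mult_iff)
  thus ?thesis by (rule of_int_0_le_iff[THEN iffD1])
qed

lemma delete_hankel:
  assumes n: "n \<ge> 1"
  shows "mat_delete (hankel a n) n n = hankel a (n-1)"
proof (rule eq_matI)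
  show "dim_row (mat_delete (hankel a n) n n) = dim_row (hankel a (n-1))"
    "dim_col (mat_delete (hankel a n) n n) = dim_col (hankel a (n-1))"
    using n unfolding mat_delete_def hankel_def by auto
  fix i j assume ij: "i < dim_row (hankel a (n-1))" "j < dim_col (hankel a (n-1))"
  hence "i < n" "j < n" using n unfolding hankel_def by auto
  thus "mat_delete (hankel a n) n n $$ (i, j) = hankel a (n-1) $$ (i, j)"
    using n unfolding mat_delete_def hankel_def by auto
qed

lemma key_ineq:
  assumes n: "n \<ge> 1"
  shows "0 \<le> det (hankel D1 (n-1)) * det (hankel D1 n)"
proof -
  define H where "H = hankel D1 n"
  have Hc: "H \<in> carrier_mat (Suc n) (Suc n)" unfolding H_def by (rule hankel_carrier)
  define v where "v k = cofactor H n k" for k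
  have row: "(\<Sum>k<Suc n. D1 (i+k) * v k) = det H * (if i = n then 1 else 0)" if i: "i < Suc n" for i
  proof -
    have "(H * adj_mat H) $$ (i,n) = (det H \<cdot>\<^sub>m 1\<^sub>m (Suc n)) $$ (i,n)"
      using adj_mat(2)[OF Hc] by simp
    moreover have "(det H \<cdot>\<^sub>m 1\<^sub>m (Suc n)) $$ (i,n) = det H * (if i = n then 1 else 0)"
      using i by simp
    moreover have "(H * adj_mat H) $$ (i,n) = (\<Sum>k<Suc n. D1 (i+k) * v k)"
    proof -
      have "(H * adj_mat H) $$ (i,n) = row H i \<bullet> col (adj_mat H) n"
        using Hc adj_mat(1)[OF Hc] i by simp
      also have "\<dots> = (\<Sum>k\<in>{0..<Suc n}. H $$ (i,k) * adj_mat H $$ (k,n))"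
        unfolding scalar_prod_def using Hc adj_mat(1)[OF Hc] i by simp
      also have "\<dots> = (\<Sum>k<Suc n. D1 (i+k) * v k)"
        unfolding lessThan_atLeast0 using Hc i
        by (intro sum.cong refl) (auto simp: H_def hankel_index adj_mat_def v_def)
      finally show ?thesis .
    qed
    ultimately show ?thesis by simp
  qed
  have "0 \<le> (\<Sum>i<Suc n. \<Sum>k<Suc n. v i * v k * D1 (i+k))" by (rule psd)
  also have "(\<Sum>i<Suc n. \<Sum>k<Suc n. v i * v k * D1 (i+k)) = (\<Sum>i<Suc n. v i * (\<Sum>k<Suc n. D1 (i+k) * v k))"
    by (simp add: sum_distrib_left algebra_simps)
  also have "\<dots> = (\<Sum>i<Suc n. v i * (det H * (if i = n then 1 else 0)))"
    using row by simp
  also have "\<dots> = v n * det H" by (simp add: if_distrib sum.delta cong: if_cong)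
  also have "v n = det (hankel D1 (n-1))"
    unfolding v_def cofactor_def H_def delete_hankel[OF n] by simp
  finally show ?thesis unfolding H_def .
qed

lemma det_ne0: "det (hankel D1 n) \<noteq> 0"
  using det_qq[of n] qq_odd[of n] by auto

lemma det_pos: "0 < det (hankel D1 n)"
proof (induction n)
  case 0
  have "hankel D1 0 \<in> carrier_mat 1 1" using hankel_carrier[of D1 0] by simp
  hence "det (hankel D1 0) = hankel D1 0 $$ (0,0)" by (rule det_single)
  thus ?case by (simp add: hankel_index D1_0)
next
  case (Suc n)
  have "0 \<le> det (hankel D1 n) * det (hankel D1 (Suc n))" using key_ineq[of "Suc n"] by simp
  hence "0 \<le> det (hankel D1 (Suc n))" using Suc.IH by (simp add: zero_le_mult_iff)
  thus ?case using det_ne0[of "Suc n"] by simp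
qed

theorem mainTheorem9:
  fixes n :: nat
  shows "\<exists>q::int. det (hankel D1 n) = 4 ^ n * q \<and> q > 0 \<and> odd q"
proof -
  have "0 < 4^n * qq n" using det_pos[of n] det_qq[of n] by simp
  hence "qq n > 0" by (simp add: zero_less_mult_iff)
  thus ?thesis using det_qq[of n] qq_odd[of n] by blast
qed

end
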